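(* Let $q$ be a prime power and $n$ a positive integer. Let $h\in\mathbb{F}_q[x]$, $f\in\mathbb{F}_{q^n}[x]$ and $P(x)=f(\mathrm{Tr}_{q^n/q}(x))+L_h(x)$. Then $P$ is a complete permutation polynomial of $\mathbb{F}_{q^n}$ if and only if: (i) $\gcd\left(h(x)\cdot(h(x)+1), \frac{x^n-1}{x-1}\right)=1$; and (ii) $Q(x):=T_n[f](x)+h(1)\cdot x\in\mathbb{F}_q[x]$ is a complete permutation polynomial of $\mathbb{F}_q$.
   Context: For $u(x)=\sum_{i=0}^m a_i x^i\in\mathbb{F}_q[x]$, its linearized $q$-associate is $L_u(x)=\sum_{i=0}^m a_i x^{q^i}$. $\mathrm{Tr}_{q^n/q}(x)=x+x^q+\cdots+x^{q^{n-1}}$. For $f(x)=\sum_{i=0}^d a_i x^i\in\mathbb{F}_{q^n}[x]$, $T_n[f](x)=\sum_{i=0}^d\mathrm{Tr}_{q^n/q}(a_i)x^i\in\mathbb{F}_q[x]$. A polynomial $b$ over a finite field $K$ is a complete permutation polynomial of $K$ if both $b(x)$ and $b(x)+x$ induce bijections of $K$. *)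

theory Defs
  imports "HOL-Computational_Algebra.Computational_Algebra"
begin

definition subfield_q :: "nat \<Rightarrow> 'a::field set" where
  "subfield_q q = {x. x ^ q = x}"

definition trace_q :: "nat \<Rightarrow> nat \<Rightarrow> 'a::field \<Rightarrow> 'a" where
  "trace_q q n x = (\<Sum>i<n. x ^ (q ^ i))"

definition lin_assoc :: "nat \<Rightarrow> 'a::field poly \<Rightarrow> 'a \<Rightarrow> 'a" where
  "lin_assoc q u x = (\<Sum>i\<le>degree u. coeff u i * x ^ (q ^ i))"

definition Tn :: "nat \<Rightarrow> nat \<Rightarrow> 'a::field poly \<Rightarrow> 'a poly" where
  "Tn q n f = (\<Sum>i\<le>degree f. monom (trace_q q n (coeff f i)) i)"

definition complete_perm_on :: "'a set \<Rightarrow> ('a \<Rightarrow> 'a::ring) \<Rightarrow> bool" where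
  "complete_perm_on S b \<longleftrightarrow> bij_betw b S S \<and> bij_betw (\<lambda>x. b x + x) S S"

end

theory Submission
  imports Defs "HOL-Number_Theory.Residues"
begin
hide_const (open) UnivPoly.coeff UnivPoly.monom Module.module.smult

lemma pow_card_same:
  fixes x :: "'a :: {finite,field}"
  shows "x ^ card (UNIV :: 'a set) = x"
proof (cases "x = 0")
  case False
  have "x * (\<Prod>y\<in>UNIV-{0}. x * y) = x * x ^ (card (UNIV :: 'a set) - 1) * \<Prod>(UNIV-{0})"
    by (simp add: prod.distrib mult_ac)
  also have "x * x ^ (card (UNIV :: 'a set) - 1) = x ^ Suc (card (UNIV :: 'a set) - 1)"
    by (subst power_Suc) auto
  also have "Suc (card (UNIV :: 'a set) - 1) = card (UNIV :: 'a set)"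
    using finite_UNIV_card_ge_0[where ?'a = 'a] by simp
  also have "(\<Prod>y\<in>UNIV-{0}. x * y) = (\<Prod>y\<in>UNIV-{0}. y)"
    by (rule prod.reindex_bij_witness[of _ "\<lambda>y. y / x" "\<lambda>y. x * y"]) (use False in auto)
  finally show ?thesis
    by simp
qed (use finite_UNIV_card_ge_0[where ?'a = 'a] in auto)

locale ffq =
  fixes q n kk :: nat and ty :: "'a::{finite,field} itself"
  assumes charp: "prime CHAR('a)"
    and qpow: "q = CHAR('a) ^ kk"
    and kpos: "kk > 0"
    and cardq: "card (UNIV::'a set) = q ^ n"
    and npos: "n > 0"
begin

abbreviation Fq :: "'a set" where "Fq \<equiv> subfield_q q"
abbreviation Tr :: "'a \<Rightarrow> 'a" where "Tr \<equiv> trace_q q n"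
abbreviation L :: "'a poly \<Rightarrow> 'a \<Rightarrow> 'a" where "L \<equiv> lin_assoc q"
definition Fp :: "'a poly \<Rightarrow> bool" where "Fp p \<longleftrightarrow> (\<forall>i. coeff p i \<in> Fq)"

lemma q_gt1: "q > 1"
proof -
  have "CHAR('a) > 1" using charp prime_gt_1_nat by blast
  thus ?thesis using qpow kpos by (metis One_nat_def one_less_power)
qed

lemma q_pos: "q > 0" using q_gt1 by simp

lemma qi_pos: "q ^ i > 0" using q_pos by simp

lemma qi_char: "q ^ i = CHAR('a) ^ (kk * i)"
  by (simp add: qpow power_mult)

lemma fr_add: "(x + y :: 'a) ^ (q ^ i) = x ^ (q ^ i) + y ^ (q ^ i)"
  by (rule freshmans_dream'[OF charp qi_char])

lemma fr_sum: "(sum (f :: _ \<Rightarrow> 'a) A) ^ (q ^ i) = sum (\<lambda>j. f j ^ (q ^ i)) A"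
  by (rule freshmans_dream_sum'[OF charp qi_char])

lemma fr_diff: "(x - y :: 'a) ^ (q ^ i) = x ^ (q ^ i) - y ^ (q ^ i)"
proof -
  have "x ^ (q ^ i) = (x - y + y) ^ (q ^ i)" by simp
  also have "\<dots> = (x - y) ^ (q ^ i) + y ^ (q ^ i)" by (rule fr_add)
  finally show ?thesis by simp
qed

lemma fr_neg: "(- x :: 'a) ^ (q ^ i) = - (x ^ (q ^ i))"
  using fr_diff[of 0 x i] qi_pos[of i] by simp

lemma fr_add1: "(x + y :: 'a) ^ q = x ^ q + y ^ q"
  using fr_add[of x y 1] by simp
lemma fr_sum1: "(sum (f :: _ \<Rightarrow> 'a) A) ^ q = sum (\<lambda>j. f j ^ q) A"
  using fr_sum[of f A 1] by simp
lemma fr_neg1: "(- x :: 'a) ^ q = - (x ^ q)"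
  using fr_neg[of x 1] by simp

lemma pow_qn: "(x::'a) ^ (q ^ n) = x"
  using pow_card_same[of x] cardq by simp

lemma F_iff: "x \<in> Fq \<longleftrightarrow> x ^ q = x"
  by (simp add: subfield_q_def)

lemma F_pow: "x \<in> Fq \<Longrightarrow> x ^ (q ^ i) = x"
proof (induction i)
  case (Suc i)
  have "x ^ (q ^ Suc i) = (x ^ q) ^ (q ^ i)"
    by (simp add: power_mult mult.commute)
  thus ?case using Suc by (simp add: F_iff)
qed simp

lemma F_0 [simp]: "0 \<in> Fq" using q_pos by (simp add: F_iff)
lemma F_1 [simp]: "1 \<in> Fq" by (simp add: F_iff)
lemma F_add: "x \<in> Fq \<Longrightarrow> y \<in> Fq \<Longrightarrow> x + y \<in> Fq" by (simp add: F_iff fr_add1)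
lemma F_mult: "x \<in> Fq \<Longrightarrow> y \<in> Fq \<Longrightarrow> x * y \<in> Fq" by (simp add: F_iff power_mult_distrib)
lemma F_neg: "x \<in> Fq \<Longrightarrow> - x \<in> Fq" by (simp add: F_iff fr_neg1)
lemma F_diff: "x \<in> Fq \<Longrightarrow> y \<in> Fq \<Longrightarrow> x - y \<in> Fq"
  using F_add[OF _ F_neg] by (simp)
lemma F_div: "x \<in> Fq \<Longrightarrow> y \<in> Fq \<Longrightarrow> x / y \<in> Fq" by (simp add: F_iff power_divide)
lemma F_power: "x \<in> Fq \<Longrightarrow> x ^ m \<in> Fq" by (simp add: F_iff flip: power_mult) (metis F_iff power_mult mult.commute)
lemma F_sum: "(\<And>i. i \<in> A \<Longrightarrow> f i \<in> Fq) \<Longrightarrow> sum f A \<in> Fq"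
  by (induction A rule: infinite_finite_induct) (auto intro: F_add)


lemma F_pow_q: "x \<in> Fq \<Longrightarrow> x ^ q = x" by (simp add: F_iff)

lemma tr_def': "Tr x = (\<Sum>i<n. x ^ (q ^ i))" by (simp add: trace_q_def)

lemma tr_add: "Tr (x + y) = Tr x + Tr y"
  by (simp add: trace_q_def fr_add sum.distrib)
lemma tr_diff: "Tr (x - y) = Tr x - Tr y"
  by (simp add: trace_q_def fr_diff sum_subtractf)
lemma tr_0 [simp]: "Tr 0 = 0"
  using q_pos by (simp add: trace_q_def power_0_left)
lemma tr_sum: "Tr (sum f A) = sum (\<lambda>j. Tr (f j)) A"
  by (induction A rule: infinite_finite_induct) (auto simp: tr_add)
lemma tr_smult: "c \<in> Fq \<Longrightarrow> Tr (c * x) = c * Tr x"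
  by (simp add: trace_q_def power_mult_distrib F_pow sum_distrib_left)

lemma tr_smult': "c \<in> Fq \<Longrightarrow> Tr (x * c) = Tr x * c"
  using tr_smult[of c x] by (simp add: mult.commute)

lemma tr_frob: "Tr (x ^ q) = Tr x"
proof -
  obtain m where m: "n = Suc m" using npos by (cases n) auto
  have "Tr (x ^ q) = (\<Sum>i<n. x ^ (q ^ Suc i))"
    by (simp add: trace_q_def power_mult[symmetric])
  also have "\<dots> = (\<Sum>i<m. x ^ (q ^ Suc i)) + x ^ (q ^ n)"
    by (simp add: m)
  also have "\<dots> = x ^ (q ^ 0) + (\<Sum>i<m. x ^ (q ^ Suc i))"
    by (simp add: pow_qn)
  also have "\<dots> = Tr x"
    unfolding trace_q_def m by (rule sum.lessThan_Suc_shift[symmetric])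
  finally show ?thesis .
qed

lemma tr_frob_pow: "Tr (x ^ (q ^ i)) = Tr x"
proof (induction i)
  case (Suc i)
  have "x ^ (q ^ Suc i) = (x ^ (q ^ i)) ^ q" by (simp add: power_mult[symmetric] mult.commute)
  thus ?case using Suc tr_frob by simp
qed simp

lemma tr_in_F: "Tr x \<in> Fq"
proof -
  have "(Tr x) ^ q = Tr (x ^ q)"
    unfolding trace_q_def fr_sum1 power_mult[symmetric] by (simp add: mult.commute)
  thus ?thesis using tr_frob[of x] by (simp add: F_iff)
qed

lemma L_eq_sum: "degree u < N \<Longrightarrow> L u x = (\<Sum>i<N. coeff u i * x ^ (q ^ i))"
  unfolding lin_assoc_def
  by (rule sum.mono_neutral_left) (auto simp: coeff_eq_0)

lemma L_zero_poly [simp]: "L 0 x = 0"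
  by (simp add: lin_assoc_def)

lemma L_pCons: "L (pCons a u) x = a * x + L u (x ^ q)"
proof -
  define M where "M = Suc (degree u)"
  have "L (pCons a u) x = (\<Sum>i<Suc M. coeff (pCons a u) i * x ^ (q ^ i))"
    by (rule L_eq_sum) (use degree_pCons_le[of a u] in \<open>auto simp: M_def\<close>)
  also have "\<dots> = coeff (pCons a u) 0 * x ^ (q ^ 0) + (\<Sum>i<M. coeff (pCons a u) (Suc i) * x ^ (q ^ Suc i))"
    by (rule sum.lessThan_Suc_shift)
  also have "\<dots> = a * x + (\<Sum>i<M. coeff u i * (x ^ q) ^ (q ^ i))"
    by (simp add: power_mult[symmetric])
  also have "(\<Sum>i<M. coeff u i * (x ^ q) ^ (q ^ i)) = L u (x ^ q)"
    by (rule L_eq_sum[symmetric]) (simp add: M_def)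
  finally show ?thesis .
qed

lemma L_smult: "L (smult a u) x = a * L u x"
proof -
  have "L (smult a u) x = (\<Sum>i<Suc (degree u). coeff (smult a u) i * x ^ (q ^ i))"
    by (rule L_eq_sum) (use degree_smult_le[of a u] in auto)
  also have "\<dots> = a * (\<Sum>i<Suc (degree u). coeff u i * x ^ (q ^ i))"
    by (simp add: sum_distrib_left mult.assoc del: sum.lessThan_Suc)
  also have "(\<Sum>i<Suc (degree u). coeff u i * x ^ (q ^ i)) = L u x"
    by (rule L_eq_sum[symmetric]) simp
  finally show ?thesis .
qed

lemma L_add_poly: "L (u + v) x = L u x + L v x"
proof -
  define N where "N = Suc (max (degree u) (degree v))"
  have "L (u + v) x = (\<Sum>i<N. coeff (u + v) i * x ^ (q ^ i))"
    by (rule L_eq_sum) (use degree_add_le_max[of u v] in \<open>auto simp: N_def\<close>)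
  also have "\<dots> = (\<Sum>i<N. coeff u i * x ^ (q ^ i)) + (\<Sum>i<N. coeff v i * x ^ (q ^ i))"
    by (simp add: sum.distrib distrib_right)
  also have "\<dots> = L u x + L v x"
    by (subst (1 2) L_eq_sum[symmetric]) (auto simp: N_def)
  finally show ?thesis .
qed

lemma L_uminus_poly: "L (- u) x = - L u x"
proof -
  have "L u x + L (-u) x = 0" using L_add_poly[of u "-u" x] by simp
  thus ?thesis by (simp add: add_eq_0_iff)
qed

lemma L_diff_poly: "L (u - v) x = L u x - L v x"
  using L_add_poly[of u "-v" x] L_uminus_poly[of v x] by simp

lemma L_add_arg: "L u (x + y) = L u x + L u y"
  by (simp add: lin_assoc_def fr_add distrib_left sum.distrib)

lemma L_zero_arg [simp]: "L u 0 = 0"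
  using q_pos by (simp add: lin_assoc_def power_0_left)

lemma L_diff_arg: "L u (x - y) = L u x - L u y"
  by (simp add: lin_assoc_def fr_diff right_diff_distrib sum_subtractf)

lemma L_frob_comm: "Fp v \<Longrightarrow> (L v x) ^ q = L v (x ^ q)"
  unfolding lin_assoc_def Fp_def
  by (simp add: fr_sum1 power_mult_distrib F_pow_q power_mult[symmetric] mult.commute)

lemma L_mult: "Fp v \<Longrightarrow> L (u * v) x = L u (L v x)"
proof (induction u arbitrary: x rule: pCons_induct)
  case (pCons a u)
  have "L (pCons a u * v) x = L (smult a v + pCons 0 (u * v)) x" by simp
  also have "\<dots> = a * L v x + L u (L v (x ^ q))"
    by (simp add: L_add_poly L_smult L_pCons pCons)
  also have "\<dots> = L (pCons a u) (L v x)"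
    by (simp add: L_pCons L_frob_comm pCons)
  finally show ?case .
qed simp

lemma L_one: "L 1 x = x"
  using L_pCons[of 1 0 x] by (simp add: one_pCons)

lemma L_monom1: "L (monom 1 m) x = x ^ (q ^ m)"
proof (induction m arbitrary: x)
  case 0 thus ?case by (simp add: L_one monom_0 one_pCons[symmetric])
next
  case (Suc m)
  thus ?case by (simp add: monom_Suc L_pCons power_mult[symmetric])
qed

lemma L_sum_poly: "L (sum p A) x = sum (\<lambda>i. L (p i) x) A"
  by (induction A rule: infinite_finite_induct) (auto simp: L_add_poly)

definition Phi :: "'a poly" where "Phi = (\<Sum>i<n. monom 1 i)"

lemma L_Phi: "L Phi x = Tr x"
  by (simp add: Phi_def L_sum_poly L_monom1 trace_q_def)

lemma Phi_mult_gen: "(\<Sum>i<m. monom (1::'a) i) * [:-1, 1:] = monom 1 m - 1"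
proof (induction m)
  case 0 thus ?case by simp
next
  case (Suc m)
  have "monom (1::'a) m * [:-1, 1:] = monom 1 (Suc m) - monom 1 m"
    by (intro poly_eqI) (auto simp: coeff_monom_mult coeff_monom coeff_pCons split: nat.splits)
  have "(\<Sum>i<Suc m. monom (1::'a) i) * [:-1, 1:] = (\<Sum>i<m. monom (1::'a) i) * [:-1, 1:] + monom (1::'a) m * [:-1, 1:]"
    by (simp only: sum.lessThan_Suc distrib_right)
  also have "\<dots> = monom 1 (Suc m) - 1"
    by (simp only: Suc.IH \<open>monom (1::'a) m * [:-1, 1:] = monom 1 (Suc m) - monom 1 m\<close>) simp
  finally show ?case .
qed

lemma Phi_mult: "Phi * [:-1, 1:] = monom 1 n - 1"
  unfolding Phi_def by (rule Phi_mult_gen)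

lemma Phi_eq: "(monom 1 n - 1) div [:-1, 1:] = Phi"
  using Phi_mult by (metis nonzero_mult_div_cancel_right pCons_eq_0_iff zero_neq_one)

lemma L_Xn1: "L (monom 1 n - 1) x = 0"
  by (simp add: L_diff_poly L_monom1 L_one pow_qn)


lemma Fp_add: "Fp u \<Longrightarrow> Fp v \<Longrightarrow> Fp (u + v)" by (simp add: Fp_def F_add)
lemma Fp_uminus: "Fp u \<Longrightarrow> Fp (- u)" by (simp add: Fp_def F_neg)
lemma Fp_diff: "Fp u \<Longrightarrow> Fp v \<Longrightarrow> Fp (u - v)" by (simp add: Fp_def F_diff)
lemma Fp_mult: "Fp u \<Longrightarrow> Fp v \<Longrightarrow> Fp (u * v)"
  unfolding Fp_def coeff_mult by (auto intro!: F_sum F_mult)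
lemma Fp_sum: "(\<And>i. i \<in> A \<Longrightarrow> Fp (p i)) \<Longrightarrow> Fp (sum p A)"
  unfolding Fp_def coeff_sum by (auto intro!: F_sum)
lemma Fp_monom: "c \<in> Fq \<Longrightarrow> Fp (monom c m)"
  by (simp add: Fp_def coeff_monom)
lemma Fp_one: "Fp 1" using Fp_monom[of 1 0] by (simp add: monom_0 one_pCons)
lemma Fp_X: "Fp [:-1, 1:]"
  by (auto simp: Fp_def coeff_pCons F_neg split: nat.splits)
lemma Fp_Phi: "Fp Phi" unfolding Phi_def by (intro Fp_sum Fp_monom) simp
lemma Fp_Xn1: "Fp (monom 1 n - 1)" by (intro Fp_diff Fp_monom Fp_one) simp

lemma poly_F: "Fp p \<Longrightarrow> c \<in> Fq \<Longrightarrow> poly p c \<in> Fq"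
  unfolding poly_altdef Fp_def by (auto intro!: F_sum F_mult F_power)

lemma degree_Xn1: "degree (monom (1::'a) n - 1) = n"
proof -
  have "degree (monom (1::'a) n + (- 1)) = degree (monom (1::'a) n)"
    by (rule degree_add_eq_left) (use npos in \<open>simp add: degree_monom_eq\<close>)
  thus ?thesis by (simp add: degree_monom_eq)
qed

lemma Phi_nz: "Phi \<noteq> 0"
  using Phi_mult degree_Xn1 npos by auto

lemma degree_Phi: "degree Phi = n - 1"
proof -
  have "degree (Phi * [:-1, 1:]) = degree Phi + 1"
    using Phi_nz by (subst degree_mult_eq) auto
  thus ?thesis using Phi_mult degree_Xn1 by simp
qed

definition sg :: "'a poly \<Rightarrow> 'a poly" where "sg p = map_poly (\<lambda>c. c ^ q) p"

lemma coeff_sg: "coeff (sg p) i = coeff p i ^ q"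
  unfolding sg_def using q_pos by (subst coeff_map_poly) (auto simp: power_0_left)

lemma sg_add: "sg (u + v) = sg u + sg v"
  by (intro poly_eqI) (simp add: coeff_sg fr_add1)
lemma sg_diff: "sg (u - v) = sg u - sg v"
  using fr_diff[of _ _ 1] by (intro poly_eqI) (simp add: coeff_sg)
lemma sg_mult: "sg (u * v) = sg u * sg v"
  by (intro poly_eqI) (simp add: coeff_sg coeff_mult fr_sum1 power_mult_distrib)
lemma Fp_iff_sg: "Fp p \<longleftrightarrow> sg p = p"
  by (simp add: Fp_def poly_eq_iff coeff_sg F_iff)
lemma degree_sg: "degree (sg p) = degree p"
  unfolding sg_def by (rule degree_map_poly) simp
lemma lead_sg: "lead_coeff (sg p) = lead_coeff p ^ q"
  by (simp add: degree_sg coeff_sg)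

lemma deg_diff_less:
  fixes x y :: "'a poly"
  assumes "degree x = degree y" "lead_coeff x = lead_coeff y" "x \<noteq> y"
  shows "degree (x - y) < degree x"
proof -
  have le: "degree (x - y) \<le> degree x" using assms(1) degree_diff_le[of x "degree x" y] by simp
  have "coeff (x - y) (degree x) = 0" using assms(1,2) by simp
  moreover have "x - y \<noteq> 0" using assms(3) by simp
  ultimately have "degree (x - y) \<noteq> degree x" by (metis leading_coeff_0_iff)
  thus ?thesis using le by simp
qed

lemma monic_deg0: "lead_coeff (m::'a poly) = 1 \<Longrightarrow> degree m = 0 \<Longrightarrow> m = 1"
  by (intro poly_eqI) (auto simp: coeff_eq_0 coeff_1)

lemma mindeg:
  fixes p r :: "'a poly"
  assumes "r \<noteq> 0"
  shows "\<exists>m a b. m = a * p + b * r \<and> m dvd p \<and> m dvd r \<and> lead_coeff m = 1 \<and>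
           (\<forall>a' b'. a' * p + b' * r \<noteq> 0 \<longrightarrow> degree m \<le> degree (a' * p + b' * r))"
proof -
  define S where "S = (\<lambda>x. \<exists>a b. x = a * p + b * r \<and> x \<noteq> 0)"
  have "S r" unfolding S_def using assms by (intro exI[of _ 0] exI[of _ 1]) auto
  then obtain m0 where m0: "S m0" and min: "\<And>y. S y \<Longrightarrow> degree m0 \<le> degree y"
    using ex_has_least_nat[of S r degree] by blast
  obtain a0 b0 where ab0: "m0 = a0 * p + b0 * r" "m0 \<noteq> 0" using m0 unfolding S_def by blast
  define c where "c = inverse (lead_coeff m0)"
  have c0: "c \<noteq> 0" using ab0(2) unfolding c_def by simp
  define m where "m = smult c m0"
  have m_eq: "m = smult c a0 * p + smult c b0 * r"
    by (simp add: m_def ab0 smult_add_right)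
  have lm: "lead_coeff m = 1" using ab0(2) by (simp add: m_def c_def)
  have dm: "degree m = degree m0" using c0 by (simp add: m_def)
  have dvd_all: "m dvd y" if "y = a * p + b * r" for y a b
  proof (rule ccontr)
    assume nd: "\<not> m dvd y"
    hence nz: "y mod m \<noteq> 0" by (simp add: dvd_eq_mod_eq_0)
    have "y mod m = y - (y div m) * m" by (simp add: minus_div_mult_eq_mod)
    also have "\<dots> = (a - (y div m) * smult c a0) * p + (b - (y div m) * smult c b0) * r"
      by (simp add: that m_eq algebra_simps)
    finally have "S (y mod m)" using nz unfolding S_def by blast
    hence "degree m0 \<le> degree (y mod m)" by (rule min)
    moreover have "degree (y mod m) < degree m"
      using nz lm by (intro degree_mod_less') auto
    ultimately show False using dm by simp
  qed
  show ?thesis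
  proof (intro exI conjI allI impI)
    show "m = smult c a0 * p + smult c b0 * r" by (rule m_eq)
    show "m dvd p" by (rule dvd_all[of p 1 0]) simp
    show "m dvd r" by (rule dvd_all[of r 0 1]) simp
    show "lead_coeff m = 1" by (rule lm)
    fix a' b' assume "a' * p + b' * r \<noteq> 0"
    hence "S (a' * p + b' * r)" unfolding S_def by blast
    thus "degree m \<le> degree (a' * p + b' * r)" using min dm by simp
  qed
qed

lemma bezout:
  fixes p r :: "'a poly"
  assumes "r \<noteq> 0" "coprime p r"
  shows "\<exists>a b. a * p + b * r = 1"
proof -
  obtain m a b where m: "m = a * p + b * r" "m dvd p" "m dvd r" "lead_coeff m = 1"
    using mindeg[OF assms(1), of p] by blast
  have "is_unit m" using assms(2) m(2,3) by (rule coprime_common_divisor)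
  moreover have "m \<noteq> 0" using m(4) by auto
  ultimately have "degree m = 0" by (simp add: is_unit_iff_degree)
  hence "m = 1" using m(4) by (rule monic_deg0[rotated])
  thus ?thesis using m(1) by metis
qed

lemma coprime_of_bezout:
  assumes "a * p + b * r = (1::'a poly)"
  shows "coprime p r"
proof (rule coprimeI)
  fix c assume "c dvd p" "c dvd r"
  hence "c dvd a * p + b * r" by simp
  thus "is_unit c" using assms by simp
qed

lemma F_common:
  fixes p r :: "'a poly"
  assumes "Fp p" "Fp r" "r \<noteq> 0" "\<not> coprime p r"
  shows "\<exists>d. d dvd p \<and> d dvd r \<and> Fp d \<and> degree d > 0"
proof -
  obtain m a b where m: "m = a * p + b * r" "m dvd p" "m dvd r" "lead_coeff m = 1"
    and min: "\<And>a' b'. a' * p + b' * r \<noteq> 0 \<Longrightarrow> degree m \<le> degree (a' * p + b' * r)"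
    using mindeg[OF assms(3), of p] by blast
  have "degree m \<noteq> 0"
  proof
    assume "degree m = 0"
    hence "m = 1" using m(4) by (rule monic_deg0[rotated])
    thus False using m(1) assms(4) coprime_of_bezout by metis
  qed
  moreover have "Fp m"
  proof (rule ccontr)
    assume "\<not> Fp m"
    hence ne: "sg m \<noteq> m" by (simp add: Fp_iff_sg)
    have sp: "sg p = p" "sg r = r" using assms(1,2) by (simp_all add: Fp_iff_sg)
    have "sg m - m = (sg a - a) * p + (sg b - b) * r"
      by (simp add: m(1) sg_add sg_mult sp algebra_simps)
    moreover have "sg m - m \<noteq> 0" using ne by simp
    ultimately have "degree m \<le> degree (sg m - m)" using min by metis
    moreover have "degree (sg m - m) < degree (sg m)"
      using ne by (intro deg_diff_less) (use m(4) in \<open>simp_all add: degree_sg lead_sg coeff_sg\<close>)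
    ultimately show False by (simp add: degree_sg)
  qed
  ultimately show ?thesis using m(2,3) by blast
qed


lemma nonvanish:
  assumes "u \<noteq> 0" "degree u < n"
  shows "\<exists>y. L u y \<noteq> 0"
proof (rule ccontr)
  assume "\<not> ?thesis"
  hence allz: "\<And>y. L u y = 0" by simp
  define Lp where "Lp = (\<Sum>i\<le>degree u. monom (coeff u i) (q ^ i))"
  have pL: "poly Lp y = L u y" for y by (simp add: Lp_def poly_sum poly_monom lin_assoc_def)
  have "coeff Lp (q ^ degree u) = (\<Sum>i\<le>degree u. if i = degree u then coeff u i else 0)"
    unfolding Lp_def coeff_sum coeff_monom
    using power_inject_exp[OF q_gt1] by (intro sum.cong) auto
  hence "coeff Lp (q ^ degree u) = lead_coeff u" by simp
  hence nz: "Lp \<noteq> 0" using assms(1) by auto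
  have "degree Lp \<le> q ^ degree u" unfolding Lp_def
    by (intro degree_sum_le) (auto intro!: order.trans[OF degree_monom_le] power_increasing simp: Suc_leI q_pos)
  also have "\<dots> < q ^ n" using assms(2) q_gt1 by (simp add: power_strict_increasing)
  finally have dlt: "degree Lp < card (UNIV::'a set)" using cardq by simp
  have "{y. poly Lp y = 0} = UNIV" using allz pL by auto
  hence "card (UNIV::'a set) \<le> degree Lp" using card_poly_roots_bound[OF nz] by simp
  thus False using dlt by simp
qed

lemma tr_surj: "c \<in> Fq \<Longrightarrow> \<exists>z. Tr z = c"
proof -
  assume c: "c \<in> Fq"
  have "degree Phi < n" using degree_Phi npos by simp
  then obtain y where y: "L Phi y \<noteq> 0" using nonvanish[OF Phi_nz] by blast
  define t where "t = Tr y"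
  have t: "t \<noteq> 0" "t \<in> Fq" using y by (simp_all add: t_def L_Phi tr_in_F)
  have "Tr ((c / t) * y) = (c / t) * t"
    using t_def F_div[OF c t(2)] tr_smult[of "c/t" y] by simp
  also have "\<dots> = c" using t by simp
  finally show ?thesis by blast
qed

lemma kerB:
  assumes Fg: "Fp g"
  shows "(\<forall>x. Tr x = 0 \<and> L g x = 0 \<longrightarrow> x = 0) \<longleftrightarrow> coprime g Phi"
proof
  assume ker: "\<forall>x. Tr x = 0 \<and> L g x = 0 \<longrightarrow> x = 0"
  show "coprime g Phi"
  proof (rule ccontr)
    assume nc: "\<not> coprime g Phi"
    obtain d where d: "d dvd g" "d dvd Phi" "Fp d" "degree d > 0"
      using F_common[OF Fg Fp_Phi Phi_nz nc] by blast
    obtain e where e: "Phi = d * e" using d(2) by (auto elim: dvdE)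
    obtain g' where g': "g = d * g'" using d(1) by (auto elim: dvdE)
    have dnz: "d \<noteq> 0" and enz: "e \<noteq> 0" using e Phi_nz by auto
    have "d * sg e = d * e"
    proof -
      have "sg Phi = Phi" using Fp_Phi by (simp add: Fp_iff_sg)
      hence "sg d * sg e = d * e" by (simp add: e sg_mult)
      thus ?thesis using d(3) by (simp add: Fp_iff_sg)
    qed
    hence Fe: "Fp e" using dnz by (simp add: Fp_iff_sg)
    define w where "w = [:-1, 1:] * e"
    have Fw: "Fp w" unfolding w_def by (intro Fp_mult Fp_X Fe)
    have wnz: "w \<noteq> 0" using enz by (simp add: w_def del: mult_pCons_left)
    have dw: "degree w = 1 + degree e" unfolding w_def using enz by (subst degree_mult_eq) auto
    have "degree Phi = degree d + degree e" using dnz enz by (simp add: e degree_mult_eq)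
    hence "degree w < n" using degree_Phi d(4) npos dw by simp
    then obtain y where y: "L w y \<noteq> 0" using nonvanish[OF wnz] by blast
    define z where "z = L w y"
    have Xn1: "monom 1 n - 1 = Phi * [:-1, 1:]" by (rule Phi_mult[symmetric])
    have "Tr z = L Phi (L w y)" by (simp add: z_def L_Phi)
    also have "\<dots> = L (Phi * w) y" by (simp add: L_mult Fw)
    also have "Phi * w = e * (monom 1 n - 1)" by (simp only: Xn1 w_def ac_simps)
    also have "L (e * (monom 1 n - 1)) y = 0" by (simp add: L_mult Fp_Xn1 L_Xn1)
    finally have trz: "Tr z = 0" .
    have "L g z = L g' (L d z)" by (simp add: g' mult.commute[of d] L_mult d(3))
    also have "L d z = L (d * w) y" by (simp add: z_def L_mult Fw)
    also have "d * w = monom 1 n - 1" by (simp only: Xn1 w_def e ac_simps)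
    also have "L (monom 1 n - 1) y = 0" by (rule L_Xn1)
    finally have "L g z = 0" by simp
    hence "z = 0" using ker trz by blast
    thus False using y by (simp add: z_def)
  qed
next
  assume cop: "coprime g Phi"
  obtain a b where ab: "a * g + b * Phi = 1" using bezout[OF Phi_nz cop] by blast
  show "\<forall>x. Tr x = 0 \<and> L g x = 0 \<longrightarrow> x = 0"
  proof (intro allI impI)
    fix x assume x: "Tr x = 0 \<and> L g x = 0"
    have "x = L (a * g + b * Phi) x" by (simp add: ab L_one)
    also have "\<dots> = L a (L g x) + L b (L Phi x)" by (simp add: L_add_poly L_mult Fg Fp_Phi)
    also have "\<dots> = 0" using x by (simp add: L_Phi)
    finally show "x = 0" .
  qed
qed

lemma tr_poly: "c \<in> Fq \<Longrightarrow> Tr (poly f c) = poly (Tn q n f) c"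
proof -
  assume c: "c \<in> Fq"
  have "Tr (poly f c) = (\<Sum>i\<le>degree f. Tr (coeff f i * c ^ i))"
    by (simp add: poly_altdef tr_sum)
  also have "\<dots> = (\<Sum>i\<le>degree f. Tr (coeff f i) * c ^ i)"
    by (intro sum.cong refl) (simp add: tr_smult' F_power c)
  also have "\<dots> = poly (Tn q n f) c"
    by (simp add: Tn_def poly_sum poly_monom)
  finally show ?thesis .
qed

lemma tr_L: "Fp g \<Longrightarrow> Tr (L g x) = poly g 1 * Tr x"
proof -
  assume Fg: "Fp g"
  have "Tr (L g x) = (\<Sum>i\<le>degree g. Tr (coeff g i * x ^ (q ^ i)))"
    by (simp add: lin_assoc_def tr_sum)
  also have "\<dots> = (\<Sum>i\<le>degree g. coeff g i * Tr x)"
    using Fg by (intro sum.cong refl) (simp add: tr_smult Fp_def tr_frob_pow)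
  also have "\<dots> = poly g 1 * Tr x"
    by (simp add: poly_altdef sum_distrib_right)
  finally show ?thesis .
qed

definition Qp :: "'a poly \<Rightarrow> 'a poly \<Rightarrow> 'a poly" where
  "Qp f g = Tn q n f + smult (poly g 1) [:0, 1:]"

lemma tr_P: "Fp g \<Longrightarrow> Tr (poly f (Tr x) + L g x) = poly (Qp f g) (Tr x)"
  by (simp add: tr_add tr_poly tr_in_F tr_L Qp_def)

lemma Fp_Q: "Fp g \<Longrightarrow> Fp (Qp f g)"
  unfolding Qp_def
proof (intro Fp_add)
  show "Fp (Tn q n f)" unfolding Tn_def by (intro Fp_sum Fp_monom tr_in_F)
  assume "Fp g"
  hence "poly g 1 \<in> Fq" by (intro poly_F) auto
  thus "Fp (smult (poly g 1) [:0, 1:])"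
    by (auto simp: Fp_def coeff_pCons F_mult split: nat.splits)
qed

lemma agw:
  assumes Fg: "Fp g"
  shows "bij (\<lambda>x. poly f (Tr x) + L g x) \<longleftrightarrow>
         (\<forall>x. Tr x = 0 \<and> L g x = 0 \<longrightarrow> x = 0) \<and> bij_betw (poly (Qp f g)) Fq Fq"
proof -
  define P where "P = (\<lambda>x. poly f (Tr x) + L g x)"
  define K where "K = (\<forall>x. Tr x = 0 \<and> L g x = 0 \<longrightarrow> x = 0)"
  define Q where "Q = poly (Qp f g)"
  have trP: "Tr (P x) = Q (Tr x)" for x unfolding P_def Q_def by (rule tr_P[OF Fg])
  have "bij P \<longleftrightarrow> K \<and> bij_betw Q Fq Fq"
  proof
    assume bP: "bij P"
    have inj: "inj P" using bP by (rule bij_is_inj)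
    have K unfolding K_def
    proof (intro allI impI)
      fix x assume x: "Tr x = 0 \<and> L g x = 0"
      have "P x = P 0" using x unfolding P_def by simp
      with inj show "x = 0" by (rule injD)
    qed
    have img: "Q ` Fq = Fq"
    proof
      show "Q ` Fq \<subseteq> Fq" using poly_F[OF Fp_Q[OF Fg]] by (auto simp: Q_def)
      show "Fq \<subseteq> Q ` Fq"
      proof
        fix c assume c: "c \<in> Fq"
        obtain z where z: "Tr z = c" using tr_surj[OF c] by blast
        have "surj P" using bP by (rule bij_is_surj)
        then obtain y where y0: "z = P y" by (rule surjE)
        hence y: "P y = z" by simp
        have "Q (Tr y) = Tr (P y)" by (rule trP[symmetric])
        also have "\<dots> = c" by (simp only: y z)
        finally have "c = Q (Tr y)" by (rule sym)
        thus "c \<in> Q ` Fq" by (rule rev_image_eqI[OF tr_in_F])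
      qed
    qed
    have "inj_on Q Fq"
      by (rule eq_card_imp_inj_on) (simp_all add: img)
    with img have "bij_betw Q Fq Fq" by (simp add: bij_betw_def)
    with \<open>K\<close> show "K \<and> bij_betw Q Fq Fq" by simp
  next
    assume KB: "K \<and> bij_betw Q Fq Fq"
    have "inj P"
    proof (rule injI)
      fix x y assume eq: "P x = P y"
      have "Q (Tr x) = Tr (P x)" by (simp only: trP)
      also have "\<dots> = Tr (P y)" by (simp only: eq)
      also have "\<dots> = Q (Tr y)" by (simp only: trP)
      finally have "Q (Tr x) = Q (Tr y)" .
      moreover have injQ: "inj_on Q Fq" using KB by (simp add: bij_betw_def)
      ultimately have tr: "Tr x = Tr y" using inj_onD[OF injQ _ tr_in_F tr_in_F] by blast
      have "poly f (Tr x) + L g x = poly f (Tr y) + L g y" using eq unfolding P_def .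
      hence "L g x = L g y" unfolding tr by (rule add_left_imp_eq)
      hence l0: "L g (x - y) = 0" by (simp add: L_diff_arg)
      have t0: "Tr (x - y) = 0" using tr by (simp add: tr_diff)
      have "K" using KB by (rule conjunct1)
      hence "x - y = 0" using l0 t0 unfolding K_def by blast
      thus "x = y" by simp
    qed
    thus "bij P" by (simp add: bij_def finite_UNIV_inj_surj)
  qed
  thus ?thesis unfolding P_def K_def Q_def .
qed


lemma coprime_prod_iff:
  fixes a b r :: "'a poly"
  assumes "r \<noteq> 0"
  shows "coprime (a * b) r \<longleftrightarrow> coprime a r \<and> coprime b r"
proof
  assume c: "coprime (a * b) r"
  show "coprime a r \<and> coprime b r"
  proof
    show "coprime a r"
    proof (rule coprimeI)
      fix c assume "c dvd a" "c dvd r"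
      thus "is_unit c" using c by (meson coprime_common_divisor dvd_mult2)
    qed
    show "coprime b r"
    proof (rule coprimeI)
      fix c assume "c dvd b" "c dvd r"
      thus "is_unit c" using c by (meson coprime_common_divisor dvd_mult)
    qed
  qed
next
  assume "coprime a r \<and> coprime b r"
  then obtain a1 b1 a2 b2 where e1: "a1 * a + b1 * r = 1" and e2: "a2 * b + b2 * r = 1"
    using bezout[OF assms] by metis
  have "(a1 * a2) * (a * b) + (a1 * a * b2 + b1 * a2 * b + b1 * b2 * r) * r
        = (a1 * a + b1 * r) * (a2 * b + b2 * r)"
    by (simp add: algebra_simps)
  also have "\<dots> = 1" by (simp add: e1 e2)
  finally show "coprime (a * b) r" by (rule coprime_of_bezout)
qed


end

theorem corollary3p4:
  fixes q n :: nat and h f :: "'a::{finite,field} poly"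
  assumes "\<exists>p k. prime p \<and> k > 0 \<and> q = p ^ k"
    and "n > 0"
    and "card (UNIV :: 'a set) = q ^ n"
    and "\<forall>i. coeff h i \<in> subfield_q q"
  shows "complete_perm_on UNIV (\<lambda>x. poly f (trace_q q n x) + lin_assoc q h x)
     \<longleftrightarrow> (coprime (h * (h + 1)) ((monom 1 n - 1) div [:-1, 1:])
          \<and> complete_perm_on (subfield_q q) (poly (Tn q n f + smult (poly h 1) [:0, 1:])))"
proof -
  obtain p k where pk: "prime p" "k > 0" "q = p ^ k" using assms(1) by blast
  have fin: "finite (UNIV::'a set)" by simp
  have cpos: "CHAR('a) > 0" by (rule finite_imp_CHAR_pos[OF fin])
  have cprime: "prime CHAR('a)" by (rule prime_CHAR_semidom[OF cpos])
  have "CHAR('a) dvd p ^ (k * n)"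
    using CHAR_dvd_CARD[where ?'a = 'a] assms(3) pk(3) by (simp add: power_mult)
  hence "CHAR('a) dvd p" by (rule prime_dvd_power[OF cprime])
  hence cp: "CHAR('a) = p" using primes_dvd_imp_eq cprime pk(1) by blast
  interpret ffq q n k "TYPE('a)"
    by standard (use cprime cp pk assms(2,3) in auto)
  have Fh: "Fp h" using assms(4) by (simp add: Fp_def)
  have Fh1: "Fp (h + 1)" by (intro Fp_add Fh Fp_one)
  define P where "P = (\<lambda>x. poly f (Tr x) + L h x)"
  have P1: "(\<lambda>x. P x + x) = (\<lambda>x. poly f (Tr x) + L (h + 1) x)"
    by (simp add: P_def L_add_poly L_one add.assoc)
  have Q1: "poly (Qp f (h + 1)) = (\<lambda>x. poly (Qp f h) x + x)"
    by (rule ext) (simp add: Qp_def algebra_simps)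
  have "complete_perm_on UNIV P \<longleftrightarrow> bij P \<and> bij (\<lambda>x. P x + x)"
    by (simp add: complete_perm_on_def)
  also have "bij P \<longleftrightarrow> coprime h Phi \<and> bij_betw (poly (Qp f h)) Fq Fq"
    unfolding P_def agw[OF Fh] kerB[OF Fh] ..
  also have "bij (\<lambda>x. P x + x) \<longleftrightarrow> coprime (h + 1) Phi \<and> bij_betw (\<lambda>x. poly (Qp f h) x + x) Fq Fq"
    unfolding P1 agw[OF Fh1] kerB[OF Fh1] Q1 ..
  also have "(coprime h Phi \<and> bij_betw (poly (Qp f h)) Fq Fq) \<and>
             (coprime (h + 1) Phi \<and> bij_betw (\<lambda>x. poly (Qp f h) x + x) Fq Fq)
           \<longleftrightarrow> coprime (h * (h + 1)) Phi \<and> complete_perm_on Fq (poly (Qp f h))"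
    using coprime_prod_iff[OF Phi_nz, of h "h + 1"] by (auto simp: complete_perm_on_def)
  finally show ?thesis by (simp add: P_def Phi_eq Qp_def)
qed

end
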